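(* Let $n\ge1$, $T>0$, $\alpha\ge0$, $l>0$, $\Lambda\in\mathbb{R}^{n\times n}$ symmetric positive definite, $\Sigma$ symmetric nonnegative definite, $\theta_1,\dots,\theta_n\ge0$, and $f(\xi,x)=\xi^\top\Lambda\xi+\alpha x^\top\Sigma x$. Assume that the initial value problem $$C'=C^\top\Lambda^{-1}C+C^\top\tilde CC-\alpha\Sigma,\qquad C(T)=lI,\qquad \tilde C(l,t):=\operatorname{diag}\Big(\frac{\theta_i}{c_{i,i}(l,t)}\Big),$$ possesses a positive definite solution $C(l,t)=(c_{i,j}(l,t))_{i,j=1,\dots,n}$ on $[0,T]$. Then $w(l,t,x):=x^\top C(l,t)x$ satisfies $$\frac{\partial w}{\partial t}(t,x)=\sup_{(\xi,\eta)\in\mathbb{R}^n\times\mathbb{R}^n}\Big[\sum_{i=1}^n\theta_i\big(w(t,x)-w(t,x-\eta_i e_i)\big)+\nabla_x w(t,x)\,\xi-f(\xi,x)\Big],\qquad w(T,x)=l\,x^\top x,$$ with maximizer $u^*=(\xi^*,\eta^* )$ given by $$\xi^*(l,t,x)=\Lambda^{-1}C(l,t)x,\qquad \eta^*(l,t,x)=\bar C(l,t)C(l,t)x,\qquad \bar C(l,t):=\operatorname{diag}\Big(\frac{1}{c_{i,i}(l,t)}\Big).$$ If there exist $i_1,\dots,i_k\in\{1,\dots,n\}$ with $\theta_{i_j}=0$ ($j=1,\dots,k$), then $\eta_{i_j}$ can be chosen arbitrarily; up to arbitrary choices of these $\eta_{i_j}$, the maximizer is unique.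
   Context: $e_i$ denotes the $i$-th standard unit vector of $\mathbb{R}^n$, $\nabla_x w$ is the gradient (row vector) in $x$, and $w(t,x)$ abbreviates $w(l,t,x)$. *)

theory Defs
  imports "HOL-Analysis.Analysis"
begin

definition pos_def_mat :: "real^'n^'n \<Rightarrow> bool" where
  "pos_def_mat M \<longleftrightarrow> transpose M = M \<and> (\<forall>x. x \<noteq> 0 \<longrightarrow> x \<bullet> (M *v x) > 0)"

definition nonneg_def_mat :: "real^'n^'n \<Rightarrow> bool" where
  "nonneg_def_mat M \<longleftrightarrow> transpose M = M \<and> (\<forall>x. x \<bullet> (M *v x) \<ge> 0)"

definition diag_mat :: "('n \<Rightarrow> real) \<Rightarrow> real^'n^'n" where
  "diag_mat d = (\<chi> i j. if i = j then d i else 0)"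

end

theory Submission
  imports Defs
begin

lemma col: "((M::real^'n^'n) *v axis i 1) $ k = M $ k $ i"
  by (simp add: matrix_vector_mult_def axis_def if_distrib[of "\<lambda>a. _ * a"] cong: if_cong)

lemma sym_dot:
  fixes M :: "real^'n^'n"
  assumes "transpose M = M"
  shows "a \<bullet> (M *v b) = b \<bullet> (M *v a)"
proof -
  have "a \<bullet> (M *v b) = (a v* M) \<bullet> b" by (simp add: dot_lmul_matrix)
  also have "a v* M = M *v a" using vector_transpose_matrix[of a M] assms by simp
  finally show ?thesis by (simp add: inner_commute)
qed

lemma quad_expand:
  fixes M :: "real^'n^'n"
  assumes "transpose M = M"
  shows "(a - b) \<bullet> (M *v (a - b)) = a \<bullet> (M *v a) - 2 * (a \<bullet> (M *v b)) + b \<bullet> (M *v b)"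
  using sym_dot[OF assms, of b a]
  by (simp add: matrix_vector_mult_diff_distrib inner_diff_left inner_diff_right)

lemma pd_inv:
  fixes L :: "real^'n^'n"
  assumes "pos_def_mat L"
  shows "L ** matrix_inv L = mat 1 \<and> matrix_inv L ** L = mat 1"
proof -
  have "\<forall>x. L *v x = 0 \<longrightarrow> x = 0"
    using assms unfolding pos_def_mat_def by (metis inner_zero_right less_irrefl)
  then have "invertible L" using matrix_left_invertible_ker invertible_left_inverse by blast
  then show ?thesis unfolding invertible_def matrix_inv_def by (rule someI_ex)
qed

lemma quad_deriv:
  fixes M :: "real^'n^'n"
  shows "((\<lambda>x. x \<bullet> (M *v x)) has_derivative (\<lambda>h. h \<bullet> (M *v x) + x \<bullet> (M *v h))) (at x)"
  by (auto intro!: derivative_eq_intros bounded_linear.has_derivative[OF matrix_vector_mul_bounded_linear])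

lemma time_deriv:
  fixes C :: "real \<Rightarrow> real^'n^'n"
  assumes "(C has_vector_derivative D) F"
  shows "((\<lambda>s. x \<bullet> (C s *v x)) has_real_derivative (x \<bullet> (D *v x))) F"
proof -
  have "linear (\<lambda>M::real^'n^'n. x \<bullet> (M *v x))"
  proof (rule linearI)
    fix r and b :: "real^'n^'n"
    have "(r *\<^sub>R b) *v x = r *\<^sub>R (b *v x)"
      by (simp add: vec_eq_iff matrix_vector_mult_def sum_distrib_left mult.assoc)
    then show "x \<bullet> ((r *\<^sub>R b) *v x) = r *\<^sub>R (x \<bullet> (b *v x))" by simp
  qed (simp add: matrix_vector_mult_add_rdistrib inner_add_right)
  then have "bounded_linear (\<lambda>M::real^'n^'n. x \<bullet> (M *v x))" using linear_conv_bounded_linear by blast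
  from bounded_linear.has_vector_derivative[OF this assms] show ?thesis
    by (simp add: has_real_derivative_iff_has_vector_derivative)
qed

theorem proposition2p5:
  fixes T \<alpha> l :: real
    and \<Lambda> \<Sigma> :: "real^'n^'n"
    and \<theta> :: "real^'n"
    and C :: "real \<Rightarrow> real \<Rightarrow> real^'n^'n"
    and f :: "real^'n \<Rightarrow> real^'n \<Rightarrow> real"
    and w :: "real \<Rightarrow> real \<Rightarrow> real^'n \<Rightarrow> real"
    and H :: "real \<Rightarrow> real^'n \<Rightarrow> real^'n \<Rightarrow> real^'n \<Rightarrow> real"
  assumes T_pos: "T > 0" and alpha_nonneg: "\<alpha> \<ge> 0" and l_pos: "l > 0"
    and Lambda_pd: "pos_def_mat \<Lambda>"
    and Sigma_nnd: "nonneg_def_mat \<Sigma>"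
    and theta_nonneg: "\<forall>i. \<theta> $ i \<ge> 0"
    and f_def: "\<forall>\<xi> x. f \<xi> x = \<xi> \<bullet> (\<Lambda> *v \<xi>) + \<alpha> * (x \<bullet> (\<Sigma> *v x))"
    and C_pd: "\<forall>t\<in>{0..T}. pos_def_mat (C l t)"
    and C_ode: "\<forall>t\<in>{0..T}. (C l has_vector_derivative
        (transpose (C l t) ** matrix_inv \<Lambda> ** C l t
         + transpose (C l t) ** diag_mat (\<lambda>i. \<theta> $ i / (C l t $ i $ i)) ** C l t
         - \<alpha> *\<^sub>R \<Sigma>)) (at t within {0..T})"
    and C_T: "C l T = l *\<^sub>R mat 1"
    and w_def: "\<forall>t x. w l t x = x \<bullet> (C l t *v x)"
    and H_def: "\<forall>t x \<xi> \<eta>. H t x \<xi> \<eta> =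
        (\<Sum>i\<in>UNIV. \<theta> $ i * (w l t x - w l t (x - (\<eta> $ i) *\<^sub>R axis i 1)))
        + frechet_derivative (w l t) (at x) \<xi> - f \<xi> x"
  shows "(\<forall>t\<in>{0..T}. \<forall>x.
            ((\<lambda>s. w l s x) has_real_derivative (SUP p\<in>UNIV. H t x (fst p) (snd p))) (at t within {0..T})
          \<and> (\<forall>\<xi> \<eta>. H t x \<xi> \<eta> \<le> H t x (matrix_inv \<Lambda> *v (C l t *v x))
                                  (diag_mat (\<lambda>i. 1 / (C l t $ i $ i)) *v (C l t *v x)))
          \<and> (\<forall>\<xi> \<eta>. H t x \<xi> \<eta> = H t x (matrix_inv \<Lambda> *v (C l t *v x))
                                  (diag_mat (\<lambda>i. 1 / (C l t $ i $ i)) *v (C l t *v x))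
                \<longleftrightarrow> (\<xi> = matrix_inv \<Lambda> *v (C l t *v x)
                     \<and> (\<forall>i. \<theta> $ i \<noteq> 0 \<longrightarrow>
                          \<eta> $ i = (diag_mat (\<lambda>i. 1 / (C l t $ i $ i)) *v (C l t *v x)) $ i))))
         \<and> (\<forall>x. w l T x = l * (x \<bullet> x))"
proof -
  have Lsym: "transpose \<Lambda> = \<Lambda>" using Lambda_pd unfolding pos_def_mat_def by blast
  have Linv: "\<Lambda> ** matrix_inv \<Lambda> = mat 1" using pd_inv[OF Lambda_pd] by blast
  have smul: "\<And>(r::real) (M::real^'n^'n) v. (r *\<^sub>R M) *v v = r *\<^sub>R (M *v v)"
    by (simp add: vec_eq_iff matrix_vector_mult_def sum_distrib_left mult.assoc)
  have vsmul: "\<And>(r::real) (M::real^'n^'n) v. M *v (r *\<^sub>R v) = r *\<^sub>R (M *v v)"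
    by (simp add: vec_eq_iff matrix_vector_mult_def sum_distrib_left mult.left_commute)
  have diagv: "\<And>d (v::real^'n) i. (diag_mat d *v v) $ i = d i * v $ i"
    by (simp add: diag_mat_def matrix_vector_mult_def if_distrib[of "\<lambda>a. a * _"] cong: if_cong)
  have part1: "\<forall>t\<in>{0..T}. \<forall>x.
            ((\<lambda>s. w l s x) has_real_derivative (SUP p\<in>UNIV. H t x (fst p) (snd p))) (at t within {0..T})
          \<and> (\<forall>\<xi> \<eta>. H t x \<xi> \<eta> \<le> H t x (matrix_inv \<Lambda> *v (C l t *v x))
                                  (diag_mat (\<lambda>i. 1 / (C l t $ i $ i)) *v (C l t *v x)))
          \<and> (\<forall>\<xi> \<eta>. H t x \<xi> \<eta> = H t x (matrix_inv \<Lambda> *v (C l t *v x))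
                                  (diag_mat (\<lambda>i. 1 / (C l t $ i $ i)) *v (C l t *v x))
                \<longleftrightarrow> (\<xi> = matrix_inv \<Lambda> *v (C l t *v x)
                     \<and> (\<forall>i. \<theta> $ i \<noteq> 0 \<longrightarrow>
                          \<eta> $ i = (diag_mat (\<lambda>i. 1 / (C l t $ i $ i)) *v (C l t *v x)) $ i)))"
  proof (intro ballI allI)
    fix t x assume t: "t \<in> {0..T}"
    define Cm where "Cm = C l t"
    define y where "y = Cm *v x"
    define z where "z = matrix_inv \<Lambda> *v y"
    define \<eta>s where "\<eta>s = diag_mat (\<lambda>i. 1 / (Cm $ i $ i)) *v y"
    have Cpd: "pos_def_mat Cm" using C_pd t Cm_def by blast
    have Csym: "transpose Cm = Cm" using Cpd unfolding pos_def_mat_def by blast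
    have cpos: "Cm $ i $ i > 0" for i
    proof -
      have "axis i (1::real) \<noteq> 0" by (simp add: axis_eq_0_iff)
      then have "axis i 1 \<bullet> (Cm *v axis i 1) > 0" using Cpd unfolding pos_def_mat_def by blast
      moreover have "axis i 1 \<bullet> (Cm *v axis i 1) = Cm $ i $ i"
        by (simp add: inner_axis' col)
      ultimately show ?thesis by simp
    qed
    have Lz: "\<Lambda> *v z = y" unfolding z_def by (simp add: matrix_vector_mul_assoc Linv)
    have \<eta>s_i: "\<eta>s $ i = y $ i / Cm $ i $ i" for i unfolding \<eta>s_def by (simp add: diagv)
    have wfun: "w l t = (\<lambda>x. x \<bullet> (Cm *v x))" using w_def Cm_def by auto
    have fr: "frechet_derivative (w l t) (at x) \<xi> = 2 * (y \<bullet> \<xi>)" for \<xi>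
    proof -
      have "frechet_derivative (w l t) (at x) = (\<lambda>h. h \<bullet> (Cm *v x) + x \<bullet> (Cm *v h))"
        unfolding wfun using frechet_derivative_at[OF quad_deriv] by metis
      then show ?thesis using sym_dot[OF Csym, of x \<xi>] unfolding y_def by (simp add: inner_commute)
    qed
    have dif: "w l t x - w l t (x - a *\<^sub>R axis i 1) = 2 * a * y $ i - a\<^sup>2 * Cm $ i $ i" for a i
    proof -
      have e1: "x \<bullet> (Cm *v (a *\<^sub>R axis i 1)) = a * y $ i"
        using sym_dot[OF Csym, of x "axis i 1"] unfolding y_def by (simp add: vsmul inner_axis')
      have e2: "(a *\<^sub>R axis i 1) \<bullet> (Cm *v (a *\<^sub>R axis i 1)) = a\<^sup>2 * Cm $ i $ i"
        by (simp add: vsmul inner_axis' col power2_eq_square)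
      show ?thesis unfolding wfun using quad_expand[OF Csym, of x "a *\<^sub>R axis i 1"] e1 e2 by simp
    qed
    define Hmax where "Hmax = (\<Sum>i\<in>UNIV. \<theta> $ i * ((y $ i)\<^sup>2 / Cm $ i $ i)) + z \<bullet> (\<Lambda> *v z) - \<alpha> * (x \<bullet> (\<Sigma> *v x))"
    have Hform: "H t x \<xi> \<eta> = Hmax - (\<Sum>i\<in>UNIV. \<theta> $ i * (Cm $ i $ i * (\<eta> $ i - \<eta>s $ i)\<^sup>2))
         - (\<xi> - z) \<bullet> (\<Lambda> *v (\<xi> - z))" for \<xi> \<eta>
    proof -
      have trm: "\<theta> $ i * (w l t x - w l t (x - (\<eta> $ i) *\<^sub>R axis i 1)) =
          \<theta> $ i * ((y $ i)\<^sup>2 / Cm $ i $ i) - \<theta> $ i * (Cm $ i $ i * (\<eta> $ i - \<eta>s $ i)\<^sup>2)" for i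
      proof -
        have "2 * \<eta> $ i * y $ i - (\<eta> $ i)\<^sup>2 * Cm $ i $ i = (y $ i)\<^sup>2 / Cm $ i $ i - Cm $ i $ i * (\<eta> $ i - y $ i / Cm $ i $ i)\<^sup>2"
          using cpos[of i] by (simp add: field_simps power2_eq_square)
        then have "\<theta> $ i * (2 * \<eta> $ i * y $ i - (\<eta> $ i)\<^sup>2 * Cm $ i $ i) = \<theta> $ i * ((y $ i)\<^sup>2 / Cm $ i $ i - Cm $ i $ i * (\<eta> $ i - \<eta>s $ i)\<^sup>2)"
          by (simp add: \<eta>s_i)
        then show ?thesis by (simp add: dif right_diff_distrib)
      qed
      have xi: "2 * (y \<bullet> \<xi>) - \<xi> \<bullet> (\<Lambda> *v \<xi>) = z \<bullet> (\<Lambda> *v z) - (\<xi> - z) \<bullet> (\<Lambda> *v (\<xi> - z))"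
        using quad_expand[OF Lsym, of \<xi> z] Lz by (simp add: inner_commute)
      have h1: "H t x \<xi> \<eta> = (\<Sum>i\<in>UNIV. \<theta> $ i * (w l t x - w l t (x - (\<eta> $ i) *\<^sub>R axis i 1)))
          + 2 * (y \<bullet> \<xi>) - (\<xi> \<bullet> (\<Lambda> *v \<xi>) + \<alpha> * (x \<bullet> (\<Sigma> *v x)))"
        using H_def f_def fr by simp
      have h2: "(\<Sum>i\<in>UNIV. \<theta> $ i * (w l t x - w l t (x - (\<eta> $ i) *\<^sub>R axis i 1)))
          = (\<Sum>i\<in>UNIV. \<theta> $ i * ((y $ i)\<^sup>2 / Cm $ i $ i)) - (\<Sum>i\<in>UNIV. \<theta> $ i * (Cm $ i $ i * (\<eta> $ i - \<eta>s $ i)\<^sup>2))"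
        by (simp only: trm sum_subtractf)
      show ?thesis using h1 h2 xi unfolding Hmax_def by linarith
    qed
    have Lnn: "v \<bullet> (\<Lambda> *v v) \<ge> 0" for v
      using Lambda_pd unfolding pos_def_mat_def by (cases "v = 0") (auto intro: less_imp_le)
    have tnn: "0 \<le> \<theta> $ i * (Cm $ i $ i * r\<^sup>2)" for i r
      using theta_nonneg cpos[of i] by (intro mult_nonneg_nonneg) (auto intro: less_imp_le)
    have Snn: "0 \<le> (\<Sum>i\<in>UNIV. \<theta> $ i * (Cm $ i $ i * (\<eta> $ i - \<eta>s $ i)\<^sup>2))" for \<eta>
      by (intro sum_nonneg tnn)
    have Hs: "H t x z \<eta>s = Hmax" using Hform[of z \<eta>s] by simp
    have le: "H t x \<xi> \<eta> \<le> Hmax" for \<xi> \<eta> using Hform[of \<xi> \<eta>] Lnn[of "\<xi> - z"] Snn[of \<eta>] by linarith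
    have eq: "H t x \<xi> \<eta> = Hmax \<longleftrightarrow> (\<xi> = z \<and> (\<forall>i. \<theta> $ i \<noteq> 0 \<longrightarrow> \<eta> $ i = \<eta>s $ i))" for \<xi> \<eta>
    proof
      assume h: "H t x \<xi> \<eta> = Hmax"
      have both: "(\<Sum>i\<in>UNIV. \<theta> $ i * (Cm $ i $ i * (\<eta> $ i - \<eta>s $ i)\<^sup>2)) = 0 \<and> (\<xi> - z) \<bullet> (\<Lambda> *v (\<xi> - z)) = 0"
        using Hform[of \<xi> \<eta>] h Lnn[of "\<xi> - z"] Snn[of \<eta>] by linarith
      have "\<xi> - z = 0"
        using both Lambda_pd unfolding pos_def_mat_def by (metis less_irrefl)
      moreover have "\<theta> $ i * (Cm $ i $ i * (\<eta> $ i - \<eta>s $ i)\<^sup>2) = 0" for i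
        using both tnn
        by (subst (asm) sum_nonneg_eq_0_iff) auto
      note z0 = this
      have "\<theta> $ i \<noteq> 0 \<longrightarrow> \<eta> $ i = \<eta>s $ i" for i using z0[of i] cpos[of i] by auto
      ultimately show "\<xi> = z \<and> (\<forall>i. \<theta> $ i \<noteq> 0 \<longrightarrow> \<eta> $ i = \<eta>s $ i)" by auto
    next
      assume h: "\<xi> = z \<and> (\<forall>i. \<theta> $ i \<noteq> 0 \<longrightarrow> \<eta> $ i = \<eta>s $ i)"
      then have "\<theta> $ i * (Cm $ i $ i * (\<eta> $ i - \<eta>s $ i)\<^sup>2) = 0" for i by (cases "\<theta> $ i = 0") auto
      then have "(\<Sum>i\<in>UNIV. \<theta> $ i * (Cm $ i $ i * (\<eta> $ i - \<eta>s $ i)\<^sup>2)) = 0"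
        by (intro sum.neutral) blast
      then show "H t x \<xi> \<eta> = Hmax" using Hform[of \<xi> \<eta>] h by simp
    qed
    have sup: "(SUP p\<in>UNIV. H t x (fst p) (snd p)) = Hmax"
      by (rule cSup_eq_maximum) (use Hs le in \<open>auto intro!: image_eqI[where x="(z, \<eta>s)"]\<close>)
    have der: "((\<lambda>s. w l s x) has_real_derivative Hmax) (at t within {0..T})"
    proof -
      define D where "D = diag_mat (\<lambda>i. \<theta> $ i / (Cm $ i $ i))"
      have d0: "((\<lambda>s. x \<bullet> (C l s *v x)) has_real_derivative
          x \<bullet> ((transpose Cm ** matrix_inv \<Lambda> ** Cm + transpose Cm ** D ** Cm - \<alpha> *\<^sub>R \<Sigma>) *v x)) (at t within {0..T})"
        using time_deriv[OF C_ode[rule_format, OF t]] unfolding Cm_def D_def .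
      have "x \<bullet> ((transpose Cm ** matrix_inv \<Lambda> ** Cm + transpose Cm ** D ** Cm - \<alpha> *\<^sub>R \<Sigma>) *v x)
          = x \<bullet> (Cm *v z) + x \<bullet> (Cm *v (D *v y)) - \<alpha> * (x \<bullet> (\<Sigma> *v x))"
        unfolding Csym z_def y_def
        by (simp add: matrix_vector_mult_add_rdistrib matrix_vector_mult_diff_rdistrib smul
             matrix_vector_mul_assoc[symmetric] inner_add_right inner_diff_right)
      also have "\<dots> = z \<bullet> y + (D *v y) \<bullet> y - \<alpha> * (x \<bullet> (\<Sigma> *v x))"
        using sym_dot[OF Csym, of x z] sym_dot[OF Csym, of x "D *v y"] unfolding y_def by simp
      also have "\<dots> = Hmax"
      proof -
        have "(D *v y) \<bullet> y = (\<Sum>i\<in>UNIV. \<theta> $ i * ((y $ i)\<^sup>2 / Cm $ i $ i))"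
          unfolding D_def by (simp add: inner_vec_def diagv power2_eq_square mult.assoc)
        moreover have "z \<bullet> y = z \<bullet> (\<Lambda> *v z)" using Lz by simp
        ultimately show ?thesis unfolding Hmax_def by simp
      qed
      finally show ?thesis using d0 w_def by simp
    qed
    show "((\<lambda>s. w l s x) has_real_derivative (SUP p\<in>UNIV. H t x (fst p) (snd p))) (at t within {0..T})
          \<and> (\<forall>\<xi> \<eta>. H t x \<xi> \<eta> \<le> H t x (matrix_inv \<Lambda> *v (C l t *v x))
                                  (diag_mat (\<lambda>i. 1 / (C l t $ i $ i)) *v (C l t *v x)))
          \<and> (\<forall>\<xi> \<eta>. H t x \<xi> \<eta> = H t x (matrix_inv \<Lambda> *v (C l t *v x))
                                  (diag_mat (\<lambda>i. 1 / (C l t $ i $ i)) *v (C l t *v x))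
                \<longleftrightarrow> (\<xi> = matrix_inv \<Lambda> *v (C l t *v x)
                     \<and> (\<forall>i. \<theta> $ i \<noteq> 0 \<longrightarrow>
                          \<eta> $ i = (diag_mat (\<lambda>i. 1 / (C l t $ i $ i)) *v (C l t *v x)) $ i)))"
      using der sup le eq unfolding z_def \<eta>s_def y_def Cm_def
      by (simp add: Hs[unfolded z_def \<eta>s_def y_def Cm_def])
  qed
  have part2: "\<forall>x. w l T x = l * (x \<bullet> x)"
    using w_def C_T smul by simp
  show ?thesis using part1 part2 by blast
qed

end
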